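(* Let $\{X(s),s\in\mathbb R^d\}$ be a strictly stationary, stochastically continuous real random field whose marginal c.d.f. $F$ is continuous and strictly increasing on its support, which is an interval. Fix $t\in\mathbb R^d$. For each $n\in\mathbb N$ let $T_f^{(n)}=\{t^{(n)}_1,\dots,t^{(n)}_n\}\subset\mathbb R^d$, $\mathbf X_n=(X(t^{(n)}_1),\dots,X(t^{(n)}_n))^\top$, let $\Lambda_n\subseteq\mathbb R^n$ and $g_n:\Lambda_n\times\mathbb R^n\to\mathbb R$ measurable, $\widehat X_\lambda(t)=g_n(\lambda,\mathbf X_n)$, and $\Lambda_{g,n}=\{\lambda\in\Lambda_n:\widehat X_\lambda(t)\text{ has c.d.f. }F\}$. Assume that for every $n$ and every $k\in\{1,\dots,n\}$ there exists $\tilde\lambda\in\Lambda_{g,n}$ with $g_n(\tilde\lambda,\mathbf X_n)=X(t^{(n)}_k)$ a.s., and that $\min_{k=1,\dots,n}\|t^{(n)}_k-t\|_2\to0$ as $n\to\infty$. Let $\gamma>0$ and let $\hat\lambda_n$ be a minimizer (assumed to exist) of one of the following problems (the same one for all $n$): (a) $\mathbf E F(X(t)\vee\widehat X_\lambda(t))$ over $\lambda\in\Lambda_{g,n}$; (b) $2\,\mathbf E F(X(t)\vee\widehat X_\lambda(t))-\mathbf E F(\widehat X_\lambda(t))$ over $\lambda\in\Lambda_n$; (c) $2\,\mathbf E F(X(t)\vee\widehat X_\lambda(t))-\mathbf E F(\widehat X_\lambda(t))+\gamma\big[\mathbf E F^2(\widehat X_\lambda(t))-\mathbf E[F(\widehat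 X_\lambda(t))\vee Y_\lambda]\big]$ over $\lambda\in\Lambda_n$, where $Y_\lambda$ is a copy of $F(\widehat X_\lambda(t))$ independent of it. Then $\widehat X_{\hat\lambda_n}(t)\to X(t)$ in probability as $n\to\infty$.
   Context: $a\vee b=\max\{a,b\}$. A random field is stochastically continuous if $X(s_k)\to X(s)$ in probability whenever $s_k\to s$. *)

theory Defs
  imports "HOL-Probability.Probability"
begin

definition conv_in_prob :: "'a measure \<Rightarrow> (nat \<Rightarrow> 'a \<Rightarrow> real) \<Rightarrow> ('a \<Rightarrow> real) \<Rightarrow> bool" where
  "conv_in_prob M Y Z \<longleftrightarrow>
     (\<forall>e>0. (\<lambda>n. measure M {\<omega> \<in> space M. \<bar>Y n \<omega> - Z \<omega>\<bar> > e}) \<longlonglongrightarrow> 0)"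

definition strictly_stationary :: "'a measure \<Rightarrow> ('d::euclidean_space \<Rightarrow> 'a \<Rightarrow> real) \<Rightarrow> bool" where
  "strictly_stationary M X \<longleftrightarrow>
     (\<forall>(m::nat) (s::nat \<Rightarrow> 'd) h.
        distr M (PiM {..<m} (\<lambda>_. borel)) (\<lambda>\<omega>. restrict (\<lambda>i. X (s i + h) \<omega>) {..<m})
      = distr M (PiM {..<m} (\<lambda>_. borel)) (\<lambda>\<omega>. restrict (\<lambda>i. X (s i) \<omega>) {..<m}))"

definition stoch_continuous :: "'a measure \<Rightarrow> ('d::euclidean_space \<Rightarrow> 'a \<Rightarrow> real) \<Rightarrow> bool" where
  "stoch_continuous M X \<longleftrightarrow>
     (\<forall>s (sk::nat \<Rightarrow> 'd). sk \<longlonglongrightarrow> s \<longrightarrow> conv_in_prob M (\<lambda>k. X (sk k)) (X s))"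

definition dist_support :: "real measure \<Rightarrow> real set" where
  "dist_support \<mu> = {x. \<forall>e>0. measure \<mu> (ball x e) > 0}"

text \<open>Vector of observations X_n = (X(t_1^(n)),...,X(t_n^(n))), indices 0..n-1.\<close>
definition obs_vec :: "('d \<Rightarrow> 'a \<Rightarrow> real) \<Rightarrow> (nat \<Rightarrow> nat \<Rightarrow> 'd) \<Rightarrow> nat \<Rightarrow> 'a \<Rightarrow> (nat \<Rightarrow> real)" where
  "obs_vec X tp n \<omega> = restrict (\<lambda>i. X (tp n i) \<omega>) {..<n}"

definition predictor where
  "predictor X tp g n l \<omega> = g n l (obs_vec X tp n \<omega>)"

definition Lambda_g where
  "Lambda_g M X tp g \<Lambda> F n =
     {l \<in> \<Lambda> n. \<forall>x. measure M {\<omega> \<in> space M. predictor X tp g n l \<omega> \<le> x} = F x}"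

definition crit_a where
  "crit_a M X tp g F t n l =
     (\<integral>\<omega>. F (max (X t \<omega>) (predictor X tp g n l \<omega>)) \<partial>M)"

definition crit_b where
  "crit_b M X tp g F t n l =
     2 * (\<integral>\<omega>. F (max (X t \<omega>) (predictor X tp g n l \<omega>)) \<partial>M)
       - (\<integral>\<omega>. F (predictor X tp g n l \<omega>) \<partial>M)"

text \<open>The independent copy Y_\<lambda> is realised on the product space M \<otimes> M.\<close>
definition crit_c where
  "crit_c M X tp g F t (\<gamma>::real) n l =
     crit_b M X tp g F t n l
     + \<gamma> * ((\<integral>\<omega>. (F (predictor X tp g n l \<omega>))\<^sup>2 \<partial>M)
            - (\<integral>p. max (F (predictor X tp g n l (fst p))) (F (predictor X tp g n l (snd p))) \<partial>(M \<Otimes>\<^sub>M M)))"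

end

theory Submission
  imports Defs
begin



definition phi :: "real \<Rightarrow> real \<Rightarrow> real" where
  "phi a u = (if a \<le> u then 1 else 0) - u"

lemma lb_int_pow:
  assumes "0 \<le> c" "c \<le> 1"
  shows "(\<integral>u. indicator {c..1} u *\<^sub>R (u ^ k) \<partial>lborel) = (1 - c ^ (Suc k)) / real (Suc k)"
proof -
  have "(\<integral>u. indicator {c..1} u *\<^sub>R (u ^ k) \<partial>lborel) = 1 ^ Suc k / real (Suc k) - c ^ Suc k / real (Suc k)"
  proof (rule integral_FTC_atLeastAtMost[OF assms(2)])
    fix x :: real
    have "((\<lambda>x. x ^ Suc k / real (Suc k)) has_real_derivative x ^ k) (at x within {c..1})"
      by (auto intro!: derivative_eq_intros simp del: power_Suc)
    then show "((\<lambda>x. x ^ Suc k / real (Suc k)) has_vector_derivative x ^ k) (at x within {c..1})"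
      by (simp add: has_real_derivative_iff_has_vector_derivative)
  qed (intro continuous_intros)
  then show ?thesis by (simp add: diff_divide_distrib)
qed

lemma setint_pow: "set_integrable lborel {c..1::real} (\<lambda>u. u ^ k)"
  by (rule borel_integrable_atLeastAtMost') (intro continuous_intros)

lemma h_calc:
  assumes a: "0 \<le> a" "a \<le> 1" and b: "0 \<le> b" "b \<le> 1"
  shows "(\<integral>u. phi a u * phi b u \<partial>restrict_space lborel {0..1}) = a\<^sup>2/2 + b\<^sup>2/2 - max a b + 1/3"
proof -
  have "(\<integral>u. phi a u * phi b u \<partial>restrict_space lborel {0..1}) =
        (\<integral>u. indicator {0..1} u *\<^sub>R (phi a u * phi b u) \<partial>lborel)"
    by (rule integral_restrict_space) simp
  also have "\<dots> = (\<integral>u. indicator {max a b..1} u *\<^sub>R (u^0) - indicator {a..1} u *\<^sub>R (u^1)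
       - indicator {b..1} u *\<^sub>R (u^1) + indicator {0..1} u *\<^sub>R (u^2) \<partial>lborel)"
    by (rule Bochner_Integration.integral_cong[OF refl]) (use a b in \<open>auto simp: indicator_def phi_def power2_eq_square algebra_simps\<close>)
  also have "\<dots> = (1 - max a b) - (1 - a^2)/2 - (1 - b^2)/2 + (1 - 0^3)/3"
  proof -
    have m: "0 \<le> max a b" "max a b \<le> 1" using a b by auto
    note i = setint_pow[of "max a b" 0] setint_pow[of a 1] setint_pow[of b 1] setint_pow[of 0 2]
    note v = lb_int_pow[OF m, of 0] lb_int_pow[OF a, of 1] lb_int_pow[OF b, of 1] lb_int_pow[of 0, of 2, simplified]
    show ?thesis
      using i v unfolding set_integrable_def
      apply (simp add: Bochner_Integration.integral_add Bochner_Integration.integral_diff numeral_eq_Suc del: power_Suc)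
      apply (simp add: field_simps)
      done
  qed
  also have "\<dots> = a\<^sup>2/2 + b\<^sup>2/2 - max a b + 1/3" by (simp add: field_simps)
  finally show ?thesis .
qed

lemma phi_meas[measurable]: "(\<lambda>(a, u). phi a u) \<in> borel_measurable (borel \<Otimes>\<^sub>M borel)"
  unfolding phi_def by measurable

lemma phi_bdd: "0 \<le> u \<Longrightarrow> u \<le> 1 \<Longrightarrow> \<bar>phi a u\<bar> \<le> 1"
  by (auto simp: phi_def)

lemma finN: "finite_measure (restrict_space lborel {0..1::real})"
  by (rule finite_measureI) (simp add: emeasure_restrict_space space_restrict_space)

lemma (in prob_space) prod_fact:
  fixes f g :: "'a \<Rightarrow> real"
  assumes [measurable]: "f \<in> borel_measurable M" "g \<in> borel_measurable M"
    and b: "\<And>\<omega>. \<omega> \<in> space M \<Longrightarrow> \<bar>f \<omega>\<bar> \<le> B" "\<And>\<omega>. \<omega> \<in> space M \<Longrightarrow> \<bar>g \<omega>\<bar> \<le> B"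
  shows "(\<integral>p. f (fst p) * g (snd p) \<partial>(M \<Otimes>\<^sub>M M)) = (\<integral>\<omega>. f \<omega> \<partial>M) * (\<integral>\<omega>. g \<omega> \<partial>M)"
proof -
  interpret P: pair_prob_space M M by standard
  have B: "0 \<le> B" using b(1)[of "SOME x. x \<in> space M"] not_empty some_in_eq by fastforce
  have ig: "integrable M g" by (rule integrable_const_bound[where B=B]) (use b in auto)
  have "integrable (M \<Otimes>\<^sub>M M) (\<lambda>p. f (fst p) * g (snd p))"
  proof (rule P.integrable_const_bound[where B="B*B"])
    show "AE x in M \<Otimes>\<^sub>M M. norm (f (fst x) * g (snd x)) \<le> B * B"
      by (rule AE_I2) (auto simp: space_pair_measure abs_mult intro!: mult_mono b B)
  qed measurable
  from P.integral_fst'[OF this, symmetric]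
  have "(\<integral>p. f (fst p) * g (snd p) \<partial>(M \<Otimes>\<^sub>M M)) = (\<integral>x. (\<integral>y. f x * g y \<partial>M) \<partial>M)"
    by simp
  also have "\<dots> = (\<integral>x. f x * (\<integral>y. g y \<partial>M) \<partial>M)" by simp
  also have "\<dots> = (\<integral>\<omega>. f \<omega> \<partial>M) * (\<integral>\<omega>. g \<omega> \<partial>M)" by simp
  finally show ?thesis .
qed

lemma (in prob_space) kernel:
  fixes V :: "'a \<Rightarrow> real"
  assumes [measurable]: "V \<in> borel_measurable M"
    and V01: "\<And>\<omega>. \<omega> \<in> space M \<Longrightarrow> 0 \<le> V \<omega> \<and> V \<omega> \<le> 1"
  shows "(\<integral>\<omega>. (V \<omega>)\<^sup>2 \<partial>M) - (\<integral>p. max (V (fst p)) (V (snd p)) \<partial>(M \<Otimes>\<^sub>M M)) + 1/3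
       = (\<integral>u. (measure M {\<omega> \<in> space M. V \<omega> \<le> u} - u)\<^sup>2 \<partial>restrict_space lborel {0..1})"
proof -
  let ?N = "restrict_space lborel {0..1::real}"
  let ?MM = "M \<Otimes>\<^sub>M M"
  interpret P: pair_prob_space M M by standard
  interpret MM: prob_space ?MM by (rule P.prob_space_axioms)
  interpret N: finite_measure ?N by (rule finN)
  interpret Q: pair_sigma_finite ?MM ?N by standard
  define f where "f p u = phi (V (fst p)) u * phi (V (snd p)) u" for p u
  have sm[measurable]: "(\<lambda>x::('a \<times> 'a) \<times> real. snd x) \<in> borel_measurable (?MM \<Otimes>\<^sub>M ?N)"
  proof (rule measurable_compose[OF measurable_snd])
    show "(\<lambda>x. x) \<in> borel_measurable ?N"
      by (rule measurable_restrict_space1) simp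
  qed
  have fm: "(\<lambda>(p, u). f p u) \<in> borel_measurable (?MM \<Otimes>\<^sub>M ?N)"
    unfolding f_def split_beta' by measurable
  have fi: "integrable (?MM \<Otimes>\<^sub>M ?N) (\<lambda>(p, u). f p u)"
  proof (rule finite_measure.integrable_const_bound[where B=1])
    show "finite_measure (?MM \<Otimes>\<^sub>M ?N)"
      using finite_measure_pair_measure[OF N.finite_measure_axioms finite_measure_pair_measure[OF finite_measure_axioms finite_measure_axioms]] .
    show "AE x in ?MM \<Otimes>\<^sub>M ?N. norm (case x of (p, u) \<Rightarrow> f p u) \<le> 1"
    proof (rule AE_I2)
      fix x assume "x \<in> space (?MM \<Otimes>\<^sub>M ?N)"
      then obtain p u where x: "x = (p, u)" "0 \<le> u" "u \<le> 1"
        by (auto simp: space_pair_measure space_restrict_space)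
      show "norm (case x of (p, u) \<Rightarrow> f p u) \<le> 1"
        using phi_bdd[OF x(2,3), of "V (fst p)"] phi_bdd[OF x(2,3), of "V (snd p)"]
        by (auto simp: x f_def abs_mult intro: mult_le_one)
    qed
  qed (rule fm)
  have fub: "(\<integral>u. (\<integral>p. f p u \<partial>?MM) \<partial>?N) = (\<integral>p. (\<integral>u. f p u \<partial>?N) \<partial>?MM)"
    using Q.Fubini_integral[OF fi] .
  have lhs: "(\<integral>u. (\<integral>p. f p u \<partial>?MM) \<partial>?N) = (\<integral>u. (measure M {\<omega> \<in> space M. V \<omega> \<le> u} - u)\<^sup>2 \<partial>?N)"
  proof (rule Bochner_Integration.integral_cong[OF refl])
    fix u assume "u \<in> space ?N"
    then have u: "0 \<le> u" "u \<le> 1" by (auto simp: space_restrict_space)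
    have "(\<integral>p. f p u \<partial>?MM) = (\<integral>\<omega>. phi (V \<omega>) u \<partial>M) * (\<integral>\<omega>. phi (V \<omega>) u \<partial>M)"
      unfolding f_def by (rule prod_fact[where B=1]) (auto intro: phi_bdd[OF u])
    also have "(\<integral>\<omega>. phi (V \<omega>) u \<partial>M) = (\<integral>\<omega>. indicator {\<omega> \<in> space M. V \<omega> \<le> u} \<omega> - u \<partial>M)"
      by (rule Bochner_Integration.integral_cong[OF refl]) (auto simp: phi_def indicator_def)
    also have "\<dots> = measure M {\<omega> \<in> space M. V \<omega> \<le> u} - u"
    proof -
      have "integrable M (indicator {\<omega> \<in> space M. V \<omega> \<le> u} :: 'a \<Rightarrow> real)"
        by (rule integrable_const_bound[where B=1]) (auto simp: indicator_def)
      then show ?thesis by (simp add: prob_space Int_absorb2)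
    qed
    finally show "(\<integral>p. f p u \<partial>?MM) = (measure M {\<omega> \<in> space M. V \<omega> \<le> u} - u)\<^sup>2"
      by (simp add: power2_eq_square)
  qed
  have rhs: "(\<integral>p. (\<integral>u. f p u \<partial>?N) \<partial>?MM) =
      (\<integral>p. (V (fst p))\<^sup>2 / 2 + (V (snd p))\<^sup>2 / 2 - max (V (fst p)) (V (snd p)) + 1/3 \<partial>?MM)"
  proof (rule Bochner_Integration.integral_cong[OF refl])
    fix p assume "p \<in> space ?MM"
    then have "fst p \<in> space M" "snd p \<in> space M" by (auto simp: space_pair_measure)
    then show "(\<integral>u. f p u \<partial>?N) = (V (fst p))\<^sup>2 / 2 + (V (snd p))\<^sup>2 / 2 - max (V (fst p)) (V (snd p)) + 1/3"
      unfolding f_def using V01 by (intro h_calc) auto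
  qed
  have Vp: "0 \<le> V (fst x) \<and> V (fst x) \<le> 1 \<and> 0 \<le> V (snd x) \<and> V (snd x) \<le> 1" if "x \<in> space ?MM" for x
    using V01 that by (auto simp: space_pair_measure)
  have i1: "integrable ?MM (\<lambda>p. (V (fst p))\<^sup>2 / 2)"
  proof (rule P.integrable_const_bound[where B=1])
    show "AE x in ?MM. norm ((V (fst x))\<^sup>2 / 2) \<le> 1"
    proof (rule AE_I2)
      fix x assume "x \<in> space ?MM"
      then have h: "0 \<le> V (fst x)" "V (fst x) \<le> 1" using Vp by blast+
      then have "(V (fst x))\<^sup>2 \<le> 1" by (simp add: power_le_one)
      then show "norm ((V (fst x))\<^sup>2 / 2) \<le> 1" by simp
    qed
  qed simp
  have i2: "integrable ?MM (\<lambda>p. (V (snd p))\<^sup>2 / 2)"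
  proof (rule P.integrable_const_bound[where B=1])
    show "AE x in ?MM. norm ((V (snd x))\<^sup>2 / 2) \<le> 1"
    proof (rule AE_I2)
      fix x assume "x \<in> space ?MM"
      then have h: "0 \<le> V (snd x)" "V (snd x) \<le> 1" using Vp by blast+
      then have "(V (snd x))\<^sup>2 \<le> 1" by (simp add: power_le_one)
      then show "norm ((V (snd x))\<^sup>2 / 2) \<le> 1" by simp
    qed
  qed simp
  have i3: "integrable ?MM (\<lambda>p. max (V (fst p)) (V (snd p)))"
  proof (rule P.integrable_const_bound[where B=1])
    show "AE x in ?MM. norm (max (V (fst x)) (V (snd x))) \<le> 1"
      by (rule AE_I2) (use Vp in \<open>auto simp: abs_le_iff max_def\<close>)
  qed simp
  have e1: "(\<integral>p. (V (fst p))\<^sup>2 / 2 \<partial>?MM) = (\<integral>\<omega>. (V \<omega>)\<^sup>2 \<partial>M) / 2"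
    using prod_fact[of "\<lambda>\<omega>. (V \<omega>)\<^sup>2" "\<lambda>_. 1" 1] V01 by (auto simp: abs_le_iff power_le_one prob_space)
  have e2: "(\<integral>p. (V (snd p))\<^sup>2 / 2 \<partial>?MM) = (\<integral>\<omega>. (V \<omega>)\<^sup>2 \<partial>M) / 2"
    using prod_fact[of "\<lambda>_. 1" "\<lambda>\<omega>. (V \<omega>)\<^sup>2" 1] V01 by (auto simp: abs_le_iff power_le_one prob_space)
  have "(\<integral>p. (V (fst p))\<^sup>2 / 2 + (V (snd p))\<^sup>2 / 2 - max (V (fst p)) (V (snd p)) + 1/3 \<partial>?MM)
      = (\<integral>\<omega>. (V \<omega>)\<^sup>2 \<partial>M) - (\<integral>p. max (V (fst p)) (V (snd p)) \<partial>?MM) + 1/3"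
    using i1 i2 i3 e1 e2 by (simp add: P.prob_space)
  then show ?thesis using fub lhs rhs by simp
qed



locale cdfctx = prob_space M for M :: "'a measure" +
  fixes Z :: "'a \<Rightarrow> real" and F :: "real \<Rightarrow> real"
  assumes Zm[measurable]: "Z \<in> borel_measurable M"
    and ZF: "\<And>x. measure M {\<omega> \<in> space M. Z \<omega> \<le> x} = F x"
    and Fc: "continuous_on UNIV F"
begin

lemma F_cdf: "F = cdf (distr M borel Z)"
proof
  fix x
  have "cdf (distr M borel Z) x = measure M (Z -` {..x} \<inter> space M)"
    by (simp add: cdf_def measure_distr)
  also have "Z -` {..x} \<inter> space M = {\<omega> \<in> space M. Z \<omega> \<le> x}" by auto
  finally show "F x = cdf (distr M borel Z) x" using ZF by simp
qed

lemma rd: "real_distribution (distr M borel Z)"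
  by simp

lemma fbm: "finite_borel_measure (distr M borel Z)"
  using real_distribution.finite_borel_measure_M[OF rd] .

lemma F_mono: "x \<le> y \<Longrightarrow> F x \<le> F y"
  unfolding F_cdf using finite_borel_measure.cdf_nondecreasing[OF fbm] by blast

lemma F_nonneg: "F x \<ge> 0"
  unfolding F_cdf using finite_borel_measure.cdf_nonneg[OF fbm] by blast

lemma F_le1: "F x \<le> 1"
  unfolding F_cdf using real_distribution.cdf_bounded_prob[OF rd] by blast

lemma F_bot: "(F \<longlongrightarrow> 0) at_bot"
  unfolding F_cdf using finite_borel_measure.cdf_lim_at_bot[OF fbm] by blast

lemma F_top: "(F \<longlongrightarrow> 1) at_top"
  unfolding F_cdf using real_distribution.cdf_lim_at_top_prob[OF rd] by blast

lemma F_cont: "isCont F x"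
  using Fc by (simp add: continuous_on_eq_continuous_at)

lemma F_max: "F (max x y) = max (F x) (F y)"
  by (metis F_mono max.absorb1 max.absorb2 max.cobounded1 max.cobounded2 nle_le)

lemma F_meas[measurable]: "F \<in> borel_measurable borel"
  using Fc borel_measurable_continuous_onI by blast

lemma quantile:
  assumes "0 < u" "u < 1"
  shows "\<exists>a. F a = u \<and> (\<forall>x. F x \<le> u \<longleftrightarrow> x \<le> a)"
proof -
  define S where "S = {x. F x \<le> u}"
  have "eventually (\<lambda>x. F x < u) at_bot"
    using order_tendstoD(2)[OF F_bot assms(1)] .
  then obtain x0 where x0: "\<And>x. x \<le> x0 \<Longrightarrow> F x < u" by (auto simp: eventually_at_bot_linorder)
  have "eventually (\<lambda>x. F x > u) at_top"
    using order_tendstoD(1)[OF F_top assms(2)] .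
  then obtain x1 where x1: "\<And>x. x \<ge> x1 \<Longrightarrow> F x > u" by (auto simp: eventually_at_top_linorder)
  have ne: "S \<noteq> {}" using x0[of x0] unfolding S_def by (metis empty_iff mem_Collect_eq order.refl less_imp_le)
  have bdd: "bdd_above S"
  proof (rule bdd_aboveI[of _ x1])
    fix x assume "x \<in> S"
    then have "F x \<le> u" by (simp add: S_def)
    then show "x \<le> x1" using x1[of x] by (cases "x1 \<le> x") auto
  qed
  have cl: "closed S" unfolding S_def
    by (rule closed_Collect_le) (auto intro: Fc continuous_on_const)
  define a where "a = Sup S"
  have aS: "a \<in> S" unfolding a_def using closed_contains_Sup[OF ne bdd cl] .
  have iff: "F x \<le> u \<longleftrightarrow> x \<le> a" for x
  proof
    assume "F x \<le> u" then show "x \<le> a" unfolding a_def using bdd by (auto intro: cSup_upper simp: S_def)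
  next
    assume "x \<le> a" then show "F x \<le> u" using aS F_mono[of x a] by (auto simp: S_def)
  qed
  have "F a = u"
  proof (rule ccontr)
    assume "F a \<noteq> u"
    then have lt: "F a < u" using aS by (auto simp: S_def)
    have "eventually (\<lambda>x. F x < u) (at a)"
      using order_tendstoD(2)[OF F_cont[of a, unfolded isCont_def] lt] .
    then obtain d where d: "d > 0" "\<And>x. x \<noteq> a \<Longrightarrow> dist x a < d \<Longrightarrow> F x < u"
      by (auto simp: eventually_at)
    have "F (a + d/2) < u" using d by (auto simp: dist_real_def)
    then have "a + d/2 \<le> a" using iff[of "a + d/2"] by linarith
    then show False using d by simp
  qed
  then show ?thesis using iff by blast
qed

lemma uniform:
  assumes "0 < u" "u < 1"
  shows "measure M {\<omega> \<in> space M. F (Z \<omega>) \<le> u} = u"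
proof -
  obtain a where a: "F a = u" "\<And>x. F x \<le> u \<longleftrightarrow> x \<le> a" using quantile[OF assms] by blast
  have "{\<omega> \<in> space M. F (Z \<omega>) \<le> u} = {\<omega> \<in> space M. Z \<omega> \<le> a}" using a by auto
  then show ?thesis using ZF a by simp
qed

lemma measure_Ioc: "a \<le> b \<Longrightarrow> measure (distr M borel Z) {a<..b} = F b - F a"
  using finite_borel_measure.emeasure_Ioc[OF fbm, of a b] F_mono[of a b]
  unfolding F_cdf[symmetric] by (simp add: measure_def)

lemma supp_point:
  assumes "0 < u" "u < 1"
  shows "\<exists>a. F a = u \<and> (\<forall>x. F x \<le> u \<longleftrightarrow> x \<le> a) \<and> a \<in> dist_support (distr M borel Z)"
proof -
  obtain a where a: "F a = u" "\<And>x. F x \<le> u \<longleftrightarrow> x \<le> a" using quantile[OF assms] by blast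
  have "measure (distr M borel Z) (ball a e) > 0" if e: "e > 0" for e
  proof -
    have "\<not> (a + e/2 \<le> a)" "a - e/2 \<le> a" using e by auto
    then have Fe: "F (a + e/2) > u" "F (a - e/2) \<le> u" using a(2)[of "a + e/2"] a(2)[of "a - e/2"] by (simp_all add: not_le)
    have "0 < measure (distr M borel Z) {a - e/2<..a + e/2}"
      using Fe measure_Ioc[of "a - e/2" "a + e/2"] e by simp
    also have "\<dots> \<le> measure (distr M borel Z) (ball a e)"
    proof (rule finite_measure.finite_measure_mono[OF finite_borel_measure.axioms(1)[OF fbm]])
      show "{a - e / 2<..a + e / 2} \<subseteq> ball a e" using e by (auto simp: dist_real_def)
      show "ball a e \<in> sets (distr M borel Z)" by simp
    qed
    finally show ?thesis .
  qed
  then have "a \<in> dist_support (distr M borel Z)" unfolding dist_support_def by blast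
  then show ?thesis using a by blast
qed

lemma supp_below:
  assumes "F x > 0"
  shows "\<exists>p \<in> dist_support (distr M borel Z). p \<le> x"
proof -
  obtain a where a: "F a = F x / 2" "\<And>y. F y \<le> F x / 2 \<longleftrightarrow> y \<le> a" "a \<in> dist_support (distr M borel Z)"
  proof -
    have "0 < F x / 2" "F x / 2 < 1" using assms F_le1[of x] by auto
    from supp_point[OF this] show ?thesis using that by blast
  qed
  have "a \<le> x"
  proof (rule ccontr)
    assume "\<not> a \<le> x"
    then have "F x \<le> F a" using F_mono[of x a] by simp
    then show False using a(1) assms by simp
  qed
  then show ?thesis using a by blast
qed

lemma supp_above:
  assumes "F x < 1"
  shows "\<exists>q \<in> dist_support (distr M borel Z). q > x"
proof -
  obtain a where a: "F a = (F x + 1) / 2" "\<And>y. F y \<le> (F x + 1) / 2 \<longleftrightarrow> y \<le> a" "a \<in> dist_support (distr M borel Z)"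
  proof -
    have "0 < (F x + 1) / 2" "(F x + 1) / 2 < 1" using assms F_nonneg[of x] by auto
    from supp_point[OF this] show ?thesis using that by blast
  qed
  have "x < a"
  proof (rule ccontr)
    assume "\<not> x < a"
    then have "F a \<le> F x" using F_mono[of a x] by simp
    then show False using a(1) assms by simp
  qed
  then show ?thesis using a by blast
qed

lemma tail_low:
  assumes "0 < d" "d < 1"
  shows "measure M {\<omega> \<in> space M. F (Z \<omega>) < d} \<le> d"
proof -
  have "measure M {\<omega> \<in> space M. F (Z \<omega>) < d} \<le> measure M {\<omega> \<in> space M. F (Z \<omega>) \<le> d}"
    by (intro finite_measure_mono) auto
  then show ?thesis using uniform[OF assms] by simp
qed

lemma tail_high:
  assumes "0 < d" "d < 1"
  shows "measure M {\<omega> \<in> space M. F (Z \<omega>) > 1 - d} \<le> d"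
proof -
  have "{\<omega> \<in> space M. F (Z \<omega>) > 1 - d} = space M - {\<omega> \<in> space M. F (Z \<omega>) \<le> 1 - d}" by auto
  then have "measure M {\<omega> \<in> space M. F (Z \<omega>) > 1 - d} = 1 - measure M {\<omega> \<in> space M. F (Z \<omega>) \<le> 1 - d}"
    by (simp add: prob_compl)
  then show ?thesis using uniform[of "1 - d"] assms by simp
qed

lemma bounds:
  assumes "0 < d" "d < 1"
  shows "\<exists>L R. L \<le> R \<and> (\<forall>x\<le>L. F x < d) \<and> (\<forall>x\<ge>R. F x > 1 - d)"
proof -
  have "eventually (\<lambda>x. F x < d) at_bot"
    using order_tendstoD(2)[OF F_bot assms(1)] .
  then obtain L where L: "\<And>x. x \<le> L \<Longrightarrow> F x < d" by (auto simp: eventually_at_bot_linorder)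
  have "1 - d < 1" using assms by simp
  have "eventually (\<lambda>x. F x > 1 - d) at_top"
    using order_tendstoD(1)[OF F_top \<open>1 - d < 1\<close>] .
  then obtain R where R: "\<And>x. x \<ge> R \<Longrightarrow> F x > 1 - d" by (auto simp: eventually_at_top_linorder)
  show ?thesis
    by (rule exI[of _ L], rule exI[of _ "max L R"]) (use L R in auto)
qed

lemma unif_cont:
  assumes e: "e > 0"
  shows "\<exists>r>0. \<forall>x y. \<bar>x - y\<bar> < r \<longrightarrow> \<bar>F x - F y\<bar> < e"
proof -
  define e' where "e' = min e (1/2)"
  have e': "0 < e'" "e' < 1" "e' \<le> e" using e by (auto simp: e'_def)
  obtain L R where LR: "L \<le> R" "\<And>x. x \<le> L \<Longrightarrow> F x < e'" "\<And>x. x \<ge> R \<Longrightarrow> F x > 1 - e'"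
    using bounds[OF e'(1,2)] by blast
  have "uniformly_continuous_on {L-1..R+1} F"
    using compact_uniformly_continuous[OF continuous_on_subset[OF Fc] compact_Icc] by blast
  then obtain d where d: "d > 0" "\<And>x x'. x \<in> {L-1..R+1} \<Longrightarrow> x' \<in> {L-1..R+1} \<Longrightarrow> dist x' x < d \<Longrightarrow> dist (F x') (F x) < e"
    unfolding uniformly_continuous_on_def using e by metis
  show ?thesis
  proof (intro exI[of _ "min 1 d"] conjI allI impI)
    show "0 < min 1 d" using d by simp
    fix x y :: real assume xy: "\<bar>x - y\<bar> < min 1 d"
    have F01: "\<And>z. 0 \<le> F z \<and> F z \<le> 1" using F_nonneg F_le1 by blast
    show "\<bar>F x - F y\<bar> < e"
    proof (cases "x \<in> {L-1..R+1} \<and> y \<in> {L-1..R+1}")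
      case True
      then show ?thesis using d(2)[of x y] xy by (auto simp: dist_real_def abs_minus_commute)
    next
      case False
      then have "(x \<le> L \<and> y \<le> L) \<or> (x \<ge> R \<and> y \<ge> R)" using xy by auto
      then show ?thesis
      proof
        assume "x \<le> L \<and> y \<le> L"
        then have "F x < e'" "F y < e'" using LR by auto
        then show ?thesis using F01[of x] F01[of y] e' by linarith
      next
        assume "x \<ge> R \<and> y \<ge> R"
        then have "F x > 1 - e'" "F y > 1 - e'" using LR by auto
        then show ?thesis using F01[of x] F01[of y] e' by linarith
      qed
    qed
  qed
qed

lemma gap:
  assumes sm: "strict_mono_on (dist_support (distr M borel Z)) F"
    and iv: "is_interval (dist_support (distr M borel Z))"
    and ep: "\<epsilon> > 0" and dl: "0 < \<delta>" "\<delta> < 1"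
  shows "\<exists>\<eta>>0. \<forall>x y. \<delta> \<le> F x \<longrightarrow> F x \<le> 1 - \<delta> \<longrightarrow> \<bar>x - y\<bar> > \<epsilon> \<longrightarrow> \<bar>F x - F y\<bar> \<ge> \<eta>"
proof -
  let ?I = "dist_support (distr M borel Z)"
  have F01: "\<And>z. 0 \<le> F z \<and> F z \<le> 1" using F_nonneg F_le1 by blast
  have posR: "F (x + \<epsilon>) - F x > 0" if x: "\<delta> \<le> F x" "F x \<le> 1 - \<delta>" for x
  proof (cases "F (x + \<epsilon>) < 1")
    case True
    obtain q where q: "q \<in> ?I" "q > x + \<epsilon>" using supp_above[OF True] by blast
    obtain p where p: "p \<in> ?I" "p \<le> x" using supp_below[of x] x dl by auto
    have "x \<in> ?I" using mem_is_interval_1_I[OF iv p(1) q(1)] p q ep by auto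
    moreover have "x + \<epsilon> \<in> ?I" using mem_is_interval_1_I[OF iv p(1) q(1)] p q ep by auto
    ultimately have "F x < F (x + \<epsilon>)" using strict_mono_onD[OF sm] ep by auto
    then show ?thesis by simp
  next
    case False
    then show ?thesis using x dl by linarith
  qed
  have posL: "F x - F (x - \<epsilon>) > 0" if x: "\<delta> \<le> F x" "F x \<le> 1 - \<delta>" for x
  proof (cases "F (x - \<epsilon>) > 0")
    case True
    obtain p where p: "p \<in> ?I" "p \<le> x - \<epsilon>" using supp_below[OF True] by blast
    obtain q where q: "q \<in> ?I" "q > x" using supp_above[of x] x dl by auto
    have "x \<in> ?I" using mem_is_interval_1_I[OF iv p(1) q(1)] p q ep by auto
    moreover have "x - \<epsilon> \<in> ?I" using mem_is_interval_1_I[OF iv p(1) q(1)] p q ep by auto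
    ultimately have "F (x - \<epsilon>) < F x" using strict_mono_onD[OF sm] ep by auto
    then show ?thesis by simp
  next
    case False
    then show ?thesis using x dl F01[of "x - \<epsilon>"] by linarith
  qed
  obtain L R where LR: "L \<le> R" "\<And>x. x \<le> L \<Longrightarrow> F x < \<delta>" "\<And>x. x \<ge> R \<Longrightarrow> F x > 1 - \<delta>"
    using bounds[OF dl] by blast
  define K where "K = {L..R} \<inter> {x. \<delta> \<le> F x \<and> F x \<le> 1 - \<delta>}"
  have inK: "x \<in> K" if "\<delta> \<le> F x" "F x \<le> 1 - \<delta>" for x
  proof -
    have "\<not> x < L" using LR(2)[of x] that by auto
    moreover have "\<not> x > R" using LR(3)[of x] that by auto
    ultimately show ?thesis using that by (auto simp: K_def)
  qed
  have cK: "compact K" unfolding K_def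
  proof (rule compact_Int_closed)
    show "closed {x. \<delta> \<le> F x \<and> F x \<le> 1 - \<delta>}"
      unfolding Collect_conj_eq
      by (intro closed_Int closed_Collect_le continuous_on_const Fc)
  qed simp
  define D where "D x = min (F (x + \<epsilon>) - F x) (F x - F (x - \<epsilon>))" for x
  have cD: "continuous_on K D" unfolding D_def
    by (intro continuous_intros continuous_on_compose2[OF Fc]) auto
  show ?thesis
  proof (cases "K = {}")
    case True
    then show ?thesis using inK by (intro exI[of _ 1]) auto
  next
    case False
    obtain x0 where x0: "x0 \<in> K" "\<And>y. y \<in> K \<Longrightarrow> D x0 \<le> D y"
      using continuous_attains_inf[OF cK False cD] by blast
    have "D x0 > 0" using posR[of x0] posL[of x0] x0(1) by (auto simp: D_def K_def)
    show ?thesis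
    proof (intro exI[of _ "D x0"] conjI allI impI)
      show "D x0 > 0" by fact
      fix x y assume x: "\<delta> \<le> F x" "F x \<le> 1 - \<delta>" and xy: "\<epsilon> < \<bar>x - y\<bar>"
      have Dx: "D x0 \<le> D x" using x0(2)[OF inK[OF x]] .
      show "D x0 \<le> \<bar>F x - F y\<bar>"
      proof (cases "y > x")
        case True
        then have "F (x + \<epsilon>) \<le> F y" using xy by (intro F_mono) auto
        then show ?thesis using Dx unfolding D_def by linarith
      next
        case False
        then have "F y \<le> F (x - \<epsilon>)" using xy by (intro F_mono) auto
        then show ?thesis using Dx unfolding D_def by linarith
      qed
    qed
  qed
qed

lemma int_bdd:
  fixes f :: "'a \<Rightarrow> real"
  assumes "f \<in> borel_measurable M" "\<And>\<omega>. \<omega> \<in> space M \<Longrightarrow> \<bar>f \<omega>\<bar> \<le> B"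
  shows "integrable M f"
  by (rule integrable_const_bound[where B=B]) (use assms in auto)

lemma conv_back:
  assumes sm: "strict_mono_on (dist_support (distr M borel Z)) F"
    and iv: "is_interval (dist_support (distr M borel Z))"
    and Ym[measurable]: "\<And>n. Y n \<in> borel_measurable M"
    and lim: "(\<lambda>n. \<integral>\<omega>. \<bar>F (Y n \<omega>) - F (Z \<omega>)\<bar> \<partial>M) \<longlonglongrightarrow> 0"
  shows "conv_in_prob M Y Z"
  unfolding conv_in_prob_def
proof (intro allI impI)
  fix \<epsilon> :: real assume ep: "\<epsilon> > 0"
  have F01: "\<And>z. 0 \<le> F z \<and> F z \<le> 1" using F_nonneg F_le1 by blast
  show "(\<lambda>n. measure M {\<omega> \<in> space M. \<bar>Y n \<omega> - Z \<omega>\<bar> > \<epsilon>}) \<longlonglongrightarrow> 0"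
    unfolding LIMSEQ_iff
  proof (intro allI impI)
    fix r :: real assume r: "r > 0"
    define \<delta> where "\<delta> = min (r/4) (1/4)"
    have dl: "0 < \<delta>" "\<delta> < 1" "\<delta> \<le> r/4" using r by (auto simp: \<delta>_def)
    obtain \<eta> where eta: "\<eta> > 0" "\<And>x y. \<delta> \<le> F x \<Longrightarrow> F x \<le> 1 - \<delta> \<Longrightarrow> \<bar>x - y\<bar> > \<epsilon> \<Longrightarrow> \<bar>F x - F y\<bar> \<ge> \<eta>"
      using gap[OF sm iv ep dl(1,2)] by blast
    have "\<eta> * r / 4 > 0" using eta r by simp
    then obtain N where N: "\<And>n. n \<ge> N \<Longrightarrow> norm ((\<integral>\<omega>. \<bar>F (Y n \<omega>) - F (Z \<omega>)\<bar> \<partial>M) - 0) < \<eta> * r / 4"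
      using lim unfolding LIMSEQ_iff by blast
    show "\<exists>no. \<forall>n\<ge>no. norm (measure M {\<omega> \<in> space M. \<bar>Y n \<omega> - Z \<omega>\<bar> > \<epsilon>} - 0) < r"
    proof (intro exI[of _ N] allI impI)
      fix n assume n: "n \<ge> N"
      define W where "W \<omega> = \<bar>F (Y n \<omega>) - F (Z \<omega>)\<bar>" for \<omega>
      have Wm[measurable]: "W \<in> borel_measurable M" unfolding W_def by measurable
      have Wi: "integrable M W"
      proof (rule int_bdd[where B=1])
        fix \<omega> show "\<bar>W \<omega>\<bar> \<le> 1" using F01[of "Y n \<omega>"] F01[of "Z \<omega>"] by (simp add: W_def abs_le_iff)
      qed simp
      have EW: "(\<integral>\<omega>. W \<omega> \<partial>M) < \<eta> * r / 4"
        using N[OF n] integral_nonneg_AE[of W M] by (auto simp: W_def)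
      have mk: "measure M {\<omega> \<in> space M. W \<omega> \<ge> \<eta>} \<le> (\<integral>\<omega>. W \<omega> \<partial>M) / \<eta>"
        by (rule integral_Markov_inequality_measure[OF Wi _ _ eta(1), where A="space M"]) (auto simp: W_def)
      also have "\<dots> < r / 4" using EW eta(1) by (simp add: field_simps)
      finally have mk': "measure M {\<omega> \<in> space M. W \<omega> \<ge> \<eta>} < r/4" .
      let ?A = "{\<omega> \<in> space M. F (Z \<omega>) < \<delta>}"
      let ?B = "{\<omega> \<in> space M. F (Z \<omega>) > 1 - \<delta>}"
      let ?C = "{\<omega> \<in> space M. W \<omega> \<ge> \<eta>}"
      have sub: "{\<omega> \<in> space M. \<bar>Y n \<omega> - Z \<omega>\<bar> > \<epsilon>} \<subseteq> ?A \<union> ?B \<union> ?C"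
      proof
        fix \<omega> assume w: "\<omega> \<in> {\<omega> \<in> space M. \<bar>Y n \<omega> - Z \<omega>\<bar> > \<epsilon>}"
        show "\<omega> \<in> ?A \<union> ?B \<union> ?C"
        proof (cases "\<delta> \<le> F (Z \<omega>) \<and> F (Z \<omega>) \<le> 1 - \<delta>")
          case True
          then have "\<bar>F (Z \<omega>) - F (Y n \<omega>)\<bar> \<ge> \<eta>" using eta(2)[of "Z \<omega>" "Y n \<omega>"] w
            by (auto simp: abs_minus_commute)
          then show ?thesis using w by (auto simp: W_def abs_minus_commute)
        next
          case False
          then show ?thesis using w by auto
        qed
      qed
      have "measure M {\<omega> \<in> space M. \<bar>Y n \<omega> - Z \<omega>\<bar> > \<epsilon>} \<le> measure M (?A \<union> ?B \<union> ?C)"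
        by (rule finite_measure_mono[OF sub]) measurable
      also have "\<dots> \<le> measure M (?A \<union> ?B) + measure M ?C"
        by (rule measure_Un_le) measurable
      also have "\<dots> \<le> measure M ?A + measure M ?B + measure M ?C"
        using measure_Un_le[of ?A M ?B] by simp
      also have "\<dots> < r"
        using tail_low[OF dl(1,2)] tail_high[OF dl(1,2)] mk' dl(3) r by linarith
      finally show "norm (measure M {\<omega> \<in> space M. \<bar>Y n \<omega> - Z \<omega>\<bar> > \<epsilon>} - 0) < r" by simp
    qed
  qed
qed

lemma F01: "0 \<le> F z" "F z \<le> 1" using F_nonneg F_le1 by auto

lemma intF[intro]:
  assumes [measurable]: "Y \<in> borel_measurable M"
  shows "integrable M (\<lambda>\<omega>. F (Y \<omega>))"
  by (rule int_bdd[where B=1]) (use F01 in auto)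

lemma intF_abs[intro]:
  assumes [measurable]: "Y \<in> borel_measurable M"
  shows "integrable M (\<lambda>\<omega>. \<bar>F (Y \<omega>) - F (Z \<omega>)\<bar>)"
proof (rule int_bdd[where B=1])
  fix \<omega> show "\<bar>\<bar>F (Y \<omega>) - F (Z \<omega>)\<bar>\<bar> \<le> 1" using F01[of "Y \<omega>"] F01[of "Z \<omega>"] by (simp add: abs_le_iff)
qed simp

lemma cand_conv:
  assumes Ym[measurable]: "\<And>n. Y n \<in> borel_measurable M" and cp: "conv_in_prob M Y Z"
  shows "(\<lambda>n. \<integral>\<omega>. \<bar>F (Y n \<omega>) - F (Z \<omega>)\<bar> \<partial>M) \<longlonglongrightarrow> 0"
  unfolding LIMSEQ_iff
proof (intro allI impI)
  fix r :: real assume r: "r > 0"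
  obtain \<rho> where rho: "\<rho> > 0" "\<And>x y. \<bar>x - y\<bar> < \<rho> \<Longrightarrow> \<bar>F x - F y\<bar> < r/2"
    using unif_cont[of "r/2"] r by auto
  have "(\<lambda>n. measure M {\<omega> \<in> space M. \<bar>Y n \<omega> - Z \<omega>\<bar> > \<rho>/2}) \<longlonglongrightarrow> 0"
    using cp rho(1) unfolding conv_in_prob_def by (meson half_gt_zero)
  then obtain N where N: "\<And>n. n \<ge> N \<Longrightarrow> norm (measure M {\<omega> \<in> space M. \<bar>Y n \<omega> - Z \<omega>\<bar> > \<rho>/2} - 0) < r/2"
    unfolding LIMSEQ_iff using r by (meson half_gt_zero)
  show "\<exists>no. \<forall>n\<ge>no. norm ((\<integral>\<omega>. \<bar>F (Y n \<omega>) - F (Z \<omega>)\<bar> \<partial>M) - 0) < r"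
  proof (intro exI[of _ N] allI impI)
    fix n assume n: "n \<ge> N"
    define C where "C = {\<omega> \<in> space M. \<bar>Y n \<omega> - Z \<omega>\<bar> > \<rho>/2}"
    have C[measurable]: "C \<in> sets M" unfolding C_def by measurable
    have pw: "\<bar>F (Y n \<omega>) - F (Z \<omega>)\<bar> \<le> r/2 + indicator C \<omega>" if w: "\<omega> \<in> space M" for \<omega>
    proof (cases "\<omega> \<in> C")
      case True
      then show ?thesis using F01[of "Y n \<omega>"] F01[of "Z \<omega>"] r by (simp add: abs_le_iff)
    next
      case False
      then have "\<bar>Y n \<omega> - Z \<omega>\<bar> < \<rho>" using w rho(1) by (auto simp: C_def)
      then show ?thesis using rho(2) False by fastforce
    qed
    have "(\<integral>\<omega>. \<bar>F (Y n \<omega>) - F (Z \<omega>)\<bar> \<partial>M) \<le> (\<integral>\<omega>. r/2 + indicator C \<omega> \<partial>M)"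
    proof (rule integral_mono)
      show "integrable M (\<lambda>\<omega>. r/2 + indicator C \<omega>)"
        by (rule int_bdd[where B="\<bar>r/2\<bar> + 1"]) (auto simp: indicator_def)
    qed (use pw in auto)
    also have "\<dots> = r/2 + measure M C"
    proof -
      have "integrable M (indicator C :: 'a \<Rightarrow> real)"
        by (rule int_bdd[where B=1]) (auto simp: indicator_def)
      then show ?thesis by (simp add: prob_space)
    qed
    also have "\<dots> < r" using N[OF n] unfolding C_def by simp
    finally have "(\<integral>\<omega>. \<bar>F (Y n \<omega>) - F (Z \<omega>)\<bar> \<partial>M) < r" .
    moreover have "(\<integral>\<omega>. \<bar>F (Y n \<omega>) - F (Z \<omega>)\<bar> \<partial>M) \<ge> 0" by (rule Bochner_Integration.integral_nonneg) auto
    ultimately show "norm ((\<integral>\<omega>. \<bar>F (Y n \<omega>) - F (Z \<omega>)\<bar> \<partial>M) - 0) < r" by simp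
  qed
qed

lemma crit_max:
  assumes [measurable]: "Y \<in> borel_measurable M"
  shows "(\<integral>\<omega>. F (max (Z \<omega>) (Y \<omega>)) \<partial>M) =
    ((\<integral>\<omega>. F (Z \<omega>) \<partial>M) + (\<integral>\<omega>. F (Y \<omega>) \<partial>M) + (\<integral>\<omega>. \<bar>F (Y \<omega>) - F (Z \<omega>)\<bar> \<partial>M)) / 2"
proof -
  have "(\<integral>\<omega>. F (max (Z \<omega>) (Y \<omega>)) \<partial>M) = (\<integral>\<omega>. (F (Z \<omega>) + F (Y \<omega>) + \<bar>F (Y \<omega>) - F (Z \<omega>)\<bar>) / 2 \<partial>M)"
  proof (rule Bochner_Integration.integral_cong[OF refl])
    fix \<omega> show "F (max (Z \<omega>) (Y \<omega>)) = (F (Z \<omega>) + F (Y \<omega>) + \<bar>F (Y \<omega>) - F (Z \<omega>)\<bar>) / 2"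
      unfolding F_max by (simp add: max_def)
  qed
  also have "\<dots> = ((\<integral>\<omega>. F (Z \<omega>) \<partial>M) + (\<integral>\<omega>. F (Y \<omega>) \<partial>M) + (\<integral>\<omega>. \<bar>F (Y \<omega>) - F (Z \<omega>)\<bar> \<partial>M)) / 2"
    by (simp add: integral_add intF intF_abs)
  finally show ?thesis .
qed

lemma same_law:
  assumes [measurable]: "Y \<in> borel_measurable M" and YF: "\<And>x. measure M {\<omega> \<in> space M. Y \<omega> \<le> x} = F x"
    and f[measurable]: "(f :: real \<Rightarrow> real) \<in> borel_measurable borel"
  shows "(\<integral>\<omega>. f (Y \<omega>) \<partial>M) = (\<integral>\<omega>. f (Z \<omega>) \<partial>M)"
proof -
  interpret Y: cdfctx M Y F by standard (auto simp: YF Fc)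
  have "distr M borel Y = distr M borel Z"
    by (rule cdf_unique) (auto simp: Y.F_cdf[symmetric] F_cdf[symmetric])
  then show ?thesis
    using integral_distr[of Y M borel f] integral_distr[of Z M borel f] by simp
qed

lemma key_a:
  assumes [measurable]: "Yh \<in> borel_measurable M" "Yc \<in> borel_measurable M"
    and Yh: "\<And>x. measure M {\<omega> \<in> space M. Yh \<omega> \<le> x} = F x"
    and Yc: "\<And>x. measure M {\<omega> \<in> space M. Yc \<omega> \<le> x} = F x"
    and le: "(\<integral>\<omega>. F (max (Z \<omega>) (Yh \<omega>)) \<partial>M) \<le> (\<integral>\<omega>. F (max (Z \<omega>) (Yc \<omega>)) \<partial>M)"
  shows "(\<integral>\<omega>. \<bar>F (Yh \<omega>) - F (Z \<omega>)\<bar> \<partial>M) \<le> (\<integral>\<omega>. \<bar>F (Yc \<omega>) - F (Z \<omega>)\<bar> \<partial>M)"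
  using le same_law[OF assms(1) Yh F_meas] same_law[OF assms(2) Yc F_meas]
  unfolding crit_max[OF assms(1)] crit_max[OF assms(2)] by simp

lemma key_b:
  assumes [measurable]: "Yh \<in> borel_measurable M" "Yc \<in> borel_measurable M"
    and le: "2 * (\<integral>\<omega>. F (max (Z \<omega>) (Yh \<omega>)) \<partial>M) - (\<integral>\<omega>. F (Yh \<omega>) \<partial>M)
       \<le> 2 * (\<integral>\<omega>. F (max (Z \<omega>) (Yc \<omega>)) \<partial>M) - (\<integral>\<omega>. F (Yc \<omega>) \<partial>M)"
  shows "(\<integral>\<omega>. \<bar>F (Yh \<omega>) - F (Z \<omega>)\<bar> \<partial>M) \<le> (\<integral>\<omega>. \<bar>F (Yc \<omega>) - F (Z \<omega>)\<bar> \<partial>M)"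
  using le unfolding crit_max[OF assms(1)] crit_max[OF assms(2)] by (simp add: field_simps)


lemma uniform01:
  assumes "0 \<le> u" "u \<le> 1"
  shows "measure M {\<omega> \<in> space M. F (Z \<omega>) \<le> u} = u"
proof -
  consider "u = 0" | "u = 1" | "0 < u \<and> u < 1" using assms by linarith
  then show ?thesis
  proof cases
    case 1
    let ?m = "measure M {\<omega> \<in> space M. F (Z \<omega>) \<le> 0}"
    show ?thesis
    proof (rule ccontr)
      assume "measure M {\<omega> \<in> space M. F (Z \<omega>) \<le> u} \<noteq> u"
      then have m: "?m > 0" using 1 measure_nonneg[of M] by (simp add: less_le)
      define v where "v = min (?m/2) (1/2)"
      have "?m \<le> 1" by (rule prob_le_1)
      then have v: "0 < v" "v < 1" "v < ?m" using m unfolding v_def by linarith+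
      have "?m \<le> measure M {\<omega> \<in> space M. F (Z \<omega>) \<le> v}"
        using v by (intro finite_measure_mono) auto
      then show False using uniform[OF v(1,2)] v(3) by simp
    qed
  next
    case 2
    have "{\<omega> \<in> space M. F (Z \<omega>) \<le> u} = space M" using 2 F01 by auto
    then show ?thesis using 2 by (simp add: prob_space)
  next
    case 3 then show ?thesis using uniform by auto
  qed
qed

lemma Q_ge:
  assumes [measurable]: "Y \<in> borel_measurable M"
  shows "(\<integral>\<omega>. (F (Y \<omega>))\<^sup>2 \<partial>M) - (\<integral>p. max (F (Y (fst p))) (F (Y (snd p))) \<partial>(M \<Otimes>\<^sub>M M)) \<ge> - 1/3"
proof -
  have "0 \<le> (\<integral>u. (measure M {\<omega> \<in> space M. F (Y \<omega>) \<le> u} - u)\<^sup>2 \<partial>restrict_space lborel {0..1})"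
    by (rule Bochner_Integration.integral_nonneg) simp
  also have "\<dots> = (\<integral>\<omega>. (F (Y \<omega>))\<^sup>2 \<partial>M) - (\<integral>p. max (F (Y (fst p))) (F (Y (snd p))) \<partial>(M \<Otimes>\<^sub>M M)) + 1/3"
    by (rule kernel[symmetric]) (auto simp: F01)
  finally show ?thesis by simp
qed

lemma Q_Z:
  "(\<integral>\<omega>. (F (Z \<omega>))\<^sup>2 \<partial>M) - (\<integral>p. max (F (Z (fst p))) (F (Z (snd p))) \<partial>(M \<Otimes>\<^sub>M M)) = - 1/3"
proof -
  have "(\<integral>\<omega>. (F (Z \<omega>))\<^sup>2 \<partial>M) - (\<integral>p. max (F (Z (fst p))) (F (Z (snd p))) \<partial>(M \<Otimes>\<^sub>M M)) + 1/3
      = (\<integral>u. (measure M {\<omega> \<in> space M. F (Z \<omega>) \<le> u} - u)\<^sup>2 \<partial>restrict_space lborel {0..1})"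
    by (rule kernel) (auto simp: F01)
  also have "\<dots> = (\<integral>u. 0 \<partial>restrict_space lborel {0..1::real})"
  proof (rule Bochner_Integration.integral_cong[OF refl])
    fix u assume "u \<in> space (restrict_space lborel {0..1::real})"
    then have "0 \<le> u" "u \<le> 1" by (auto simp: space_restrict_space)
    then show "(measure M {\<omega> \<in> space M. F (Z \<omega>) \<le> u} - u)\<^sup>2 = 0" using uniform01 by simp
  qed
  finally show ?thesis by simp
qed

lemma key_c:
  assumes [measurable]: "Yh \<in> borel_measurable M" "Yc \<in> borel_measurable M"
    and Yc: "\<And>x. measure M {\<omega> \<in> space M. Yc \<omega> \<le> x} = F x"
    and g: "\<gamma> > 0"
    and le: "2 * (\<integral>\<omega>. F (max (Z \<omega>) (Yh \<omega>)) \<partial>M) - (\<integral>\<omega>. F (Yh \<omega>) \<partial>M)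
        + \<gamma> * ((\<integral>\<omega>. (F (Yh \<omega>))\<^sup>2 \<partial>M) - (\<integral>p. max (F (Yh (fst p))) (F (Yh (snd p))) \<partial>(M \<Otimes>\<^sub>M M)))
       \<le> 2 * (\<integral>\<omega>. F (max (Z \<omega>) (Yc \<omega>)) \<partial>M) - (\<integral>\<omega>. F (Yc \<omega>) \<partial>M)
        + \<gamma> * ((\<integral>\<omega>. (F (Yc \<omega>))\<^sup>2 \<partial>M) - (\<integral>p. max (F (Yc (fst p))) (F (Yc (snd p))) \<partial>(M \<Otimes>\<^sub>M M)))"
  shows "(\<integral>\<omega>. \<bar>F (Yh \<omega>) - F (Z \<omega>)\<bar> \<partial>M) \<le> (\<integral>\<omega>. \<bar>F (Yc \<omega>) - F (Z \<omega>)\<bar> \<partial>M)"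
proof -
  interpret C: cdfctx M Yc F by standard (auto simp: Yc Fc)
  have qc: "(\<integral>\<omega>. (F (Yc \<omega>))\<^sup>2 \<partial>M) - (\<integral>p. max (F (Yc (fst p))) (F (Yc (snd p))) \<partial>(M \<Otimes>\<^sub>M M)) = - 1/3"
    by (rule C.Q_Z)
  have qh: "\<gamma> * ((\<integral>\<omega>. (F (Yh \<omega>))\<^sup>2 \<partial>M) - (\<integral>p. max (F (Yh (fst p))) (F (Yh (snd p))) \<partial>(M \<Otimes>\<^sub>M M))) \<ge> \<gamma> * (- 1/3)"
    using Q_ge[OF assms(1)] g by (intro mult_left_mono) auto
  show ?thesis
    using le qh unfolding qc crit_max[OF assms(1)] crit_max[OF assms(2)] by (simp add: field_simps)
qed

end


lemma pred_meas:
  assumes X: "\<And>s. X s \<in> borel_measurable M"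
    and L: "\<Lambda> \<subseteq> PiE {..<n} (\<lambda>_. UNIV)"
    and g: "(\<lambda>(l, x). g n l x) \<in> borel_measurable
            (restrict_space (PiM {..<n} (\<lambda>_. borel)) \<Lambda> \<Otimes>\<^sub>M PiM {..<n} (\<lambda>_. borel))"
    and l: "l \<in> \<Lambda>"
  shows "predictor X tp g n l \<in> borel_measurable M"
proof -
  have o: "obs_vec X tp n \<in> M \<rightarrow>\<^sub>M PiM {..<n} (\<lambda>_. borel)"
    unfolding obs_vec_def[abs_def] by (rule measurable_restrict) (simp add: X)
  have c: "(\<lambda>\<omega>. l) \<in> M \<rightarrow>\<^sub>M restrict_space (PiM {..<n} (\<lambda>_. borel)) \<Lambda>"
    by (rule measurable_const) (use L l in \<open>auto simp: space_restrict_space space_PiM\<close>)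
  have "(\<lambda>\<omega>. (l, obs_vec X tp n \<omega>)) \<in> M \<rightarrow>\<^sub>M (restrict_space (PiM {..<n} (\<lambda>_. borel)) \<Lambda> \<Otimes>\<^sub>M PiM {..<n} (\<lambda>_. borel))"
    by (rule measurable_Pair[OF c o])
  from measurable_comp[OF this g] show ?thesis
    unfolding predictor_def[abs_def] by (simp add: comp_def)
qed

theorem mainTheorem12:
  fixes M :: "'a measure"
    and X :: "'d::euclidean_space \<Rightarrow> 'a \<Rightarrow> real"
    and F :: "real \<Rightarrow> real"
    and t :: 'd
    and tp :: "nat \<Rightarrow> nat \<Rightarrow> 'd"
    and \<Lambda> :: "nat \<Rightarrow> (nat \<Rightarrow> real) set"
    and g :: "nat \<Rightarrow> (nat \<Rightarrow> real) \<Rightarrow> (nat \<Rightarrow> real) \<Rightarrow> real"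
    and lamhat :: "nat \<Rightarrow> (nat \<Rightarrow> real)"
    and \<gamma> :: real
  assumes "prob_space M"
    and "\<And>s. X s \<in> borel_measurable M"
    and "strictly_stationary M X"
    and "stoch_continuous M X"
    and "\<And>s x. measure M {\<omega> \<in> space M. X s \<omega> \<le> x} = F x"
    and "continuous_on UNIV F"
    and "strict_mono_on (dist_support (distr M borel (X t))) F"
    and "is_interval (dist_support (distr M borel (X t)))"
    and "\<And>n. n \<ge> 1 \<Longrightarrow> \<Lambda> n \<subseteq> PiE {..<n} (\<lambda>_. UNIV)"
    and "\<And>n. n \<ge> 1 \<Longrightarrow> (\<lambda>(l, x). g n l x) \<in> borel_measurable
            (restrict_space (PiM {..<n} (\<lambda>_. borel)) (\<Lambda> n) \<Otimes>\<^sub>M PiM {..<n} (\<lambda>_. borel))"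
    and "\<And>n k. n \<ge> 1 \<Longrightarrow> k < n \<Longrightarrow>
            \<exists>l \<in> Lambda_g M X tp g \<Lambda> F n.
              AE \<omega> in M. predictor X tp g n l \<omega> = X (tp n k) \<omega>"
    and "(\<lambda>n. Min {norm (tp n k - t) | k. k < n}) \<longlonglongrightarrow> 0"
    and "\<gamma> > 0"
    and "(\<forall>n\<ge>1. lamhat n \<in> Lambda_g M X tp g \<Lambda> F n \<and>
            (\<forall>l \<in> Lambda_g M X tp g \<Lambda> F n. crit_a M X tp g F t n (lamhat n) \<le> crit_a M X tp g F t n l))
       \<or> (\<forall>n\<ge>1. lamhat n \<in> \<Lambda> n \<and>
            (\<forall>l \<in> \<Lambda> n. crit_b M X tp g F t n (lamhat n) \<le> crit_b M X tp g F t n l))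
       \<or> (\<forall>n\<ge>1. lamhat n \<in> \<Lambda> n \<and>
            (\<forall>l \<in> \<Lambda> n. crit_c M X tp g F t \<gamma> n (lamhat n) \<le> crit_c M X tp g F t \<gamma> n l))"
  shows "conv_in_prob M (\<lambda>n. predictor X tp g n (lamhat n)) (X t)"
proof -
  note A = assms
  interpret prob_space M by (rule A(1))
  interpret Z: cdfctx M "X t" F by standard (use A(2,5,6) in auto)
  have pm: "predictor X tp g n l \<in> borel_measurable M" if "n \<ge> 1" "l \<in> \<Lambda> n" for n l
    by (rule pred_meas[where g=g and tp=tp, OF A(2) A(9)[OF that(1)] A(10)[OF that(1)] that(2)])
  define S where "S n = {norm (tp n k - t) | k. k < n}" for n
  have Sex: "\<exists>k<n. norm (tp n k - t) = Min (S n)" if "n \<ge> 1" for n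
  proof -
    have "finite (S n)" unfolding S_def by simp
    moreover have "norm (tp n 0 - t) \<in> S n" using that unfolding S_def by auto
    then have "S n \<noteq> {}" by blast
    ultimately have "Min (S n) \<in> S n" by (rule Min_in)
    then show ?thesis unfolding S_def by auto
  qed
  define kk where "kk n = (SOME k. k < n \<and> norm (tp n k - t) = Min (S n))" for n
  have kk: "kk n < n \<and> norm (tp n (kk n) - t) = Min (S n)" if "n \<ge> 1" for n
    unfolding kk_def by (rule someI_ex) (use Sex[OF that] in blast)
  define sk where "sk n = (if n \<ge> 1 then tp n (kk n) else t)" for n
  have "(\<lambda>n. dist (sk n) t) \<longlonglongrightarrow> 0"
  proof (rule Lim_transform_eventually[OF A(12)[folded S_def]])
    show "\<forall>\<^sub>F n in sequentially. Min (S n) = dist (sk n) t"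
      using eventually_ge_at_top[of 1]
      by eventually_elim (use kk in \<open>auto simp: sk_def dist_norm\<close>)
  qed
  then have skt: "sk \<longlonglongrightarrow> t" using tendsto_dist_iff by blast
  have cp: "conv_in_prob M (\<lambda>n. X (sk n)) (X t)"
    using A(4) skt unfolding stoch_continuous_def by blast
  have cc: "(\<lambda>n. \<integral>\<omega>. \<bar>F (X (sk n) \<omega>) - F (X t \<omega>)\<bar> \<partial>M) \<longlonglongrightarrow> 0"
    by (rule Z.cand_conv[OF _ cp]) (simp add: A(2))
  have bound: "(\<integral>\<omega>. \<bar>F (predictor X tp g n (lamhat n) \<omega>) - F (X t \<omega>)\<bar> \<partial>M)
      \<le> (\<integral>\<omega>. \<bar>F (X (sk n) \<omega>) - F (X t \<omega>)\<bar> \<partial>M)" if n: "n \<ge> 1" for n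
  proof -
    obtain lc where lc: "lc \<in> Lambda_g M X tp g \<Lambda> F n"
      "AE \<omega> in M. predictor X tp g n lc \<omega> = X (tp n (kk n)) \<omega>"
      using A(11)[OF n] kk[OF n] by blast
    have lcL: "lc \<in> \<Lambda> n" and lcF: "\<And>x. measure M {\<omega> \<in> space M. predictor X tp g n lc \<omega> \<le> x} = F x"
      using lc(1) unfolding Lambda_g_def by auto
    have Ycm[measurable]: "predictor X tp g n lc \<in> borel_measurable M" by (rule pm[OF n lcL])
    have skn: "sk n = tp n (kk n)" using n by (simp add: sk_def)
    have Xs[measurable]: "X (sk n) \<in> borel_measurable M" "X (tp n (kk n)) \<in> borel_measurable M"
      "X t \<in> borel_measurable M" using A(2) by auto
    note Z.F_meas[measurable]
    have eqc: "(\<integral>\<omega>. \<bar>F (predictor X tp g n lc \<omega>) - F (X t \<omega>)\<bar> \<partial>M)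
        = (\<integral>\<omega>. \<bar>F (X (sk n) \<omega>) - F (X t \<omega>)\<bar> \<partial>M)"
      by (rule integral_cong_AE) (use lc(2) skn in auto)
    have "(\<integral>\<omega>. \<bar>F (predictor X tp g n (lamhat n) \<omega>) - F (X t \<omega>)\<bar> \<partial>M)
        \<le> (\<integral>\<omega>. \<bar>F (predictor X tp g n lc \<omega>) - F (X t \<omega>)\<bar> \<partial>M)"
      using A(14)
    proof (elim disjE)
      assume a: "\<forall>n\<ge>1. lamhat n \<in> Lambda_g M X tp g \<Lambda> F n \<and>
            (\<forall>l \<in> Lambda_g M X tp g \<Lambda> F n. crit_a M X tp g F t n (lamhat n) \<le> crit_a M X tp g F t n l)"
      have lh: "lamhat n \<in> \<Lambda> n" "\<And>x. measure M {\<omega> \<in> space M. predictor X tp g n (lamhat n) \<omega> \<le> x} = F x"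
        using a n unfolding Lambda_g_def by auto
      show ?thesis
        by (rule Z.key_a[OF pm[OF n lh(1)] Ycm lh(2) lcF])
           (use a n lc(1) in \<open>auto simp: crit_a_def\<close>)
    next
      assume a: "\<forall>n\<ge>1. lamhat n \<in> \<Lambda> n \<and>
            (\<forall>l \<in> \<Lambda> n. crit_b M X tp g F t n (lamhat n) \<le> crit_b M X tp g F t n l)"
      have lh: "lamhat n \<in> \<Lambda> n" using a n by auto
      show ?thesis
        by (rule Z.key_b[OF pm[OF n lh(1)] Ycm])
           (use a n lcL in \<open>auto simp: crit_b_def\<close>)
    next
      assume a: "\<forall>n\<ge>1. lamhat n \<in> \<Lambda> n \<and>
            (\<forall>l \<in> \<Lambda> n. crit_c M X tp g F t \<gamma> n (lamhat n) \<le> crit_c M X tp g F t \<gamma> n l)"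
      have lh: "lamhat n \<in> \<Lambda> n" using a n by auto
      show ?thesis
        by (rule Z.key_c[OF pm[OF n lh(1)] Ycm lcF A(13)])
           (use a n lcL in \<open>auto simp: crit_c_def crit_b_def\<close>)
    qed
    then show ?thesis using eqc by simp
  qed
  define Yh where "Yh n = predictor X tp g (Suc n) (lamhat (Suc n))" for n
  have Yhm: "Yh n \<in> borel_measurable M" for n
  proof -
    have "lamhat (Suc n) \<in> \<Lambda> (Suc n)"
      using A(14) unfolding Lambda_g_def by auto
    then show ?thesis unfolding Yh_def by (intro pm) auto
  qed
  have lim: "(\<lambda>n. \<integral>\<omega>. \<bar>F (Yh n \<omega>) - F (X t \<omega>)\<bar> \<partial>M) \<longlonglongrightarrow> 0"
  proof (rule tendsto_sandwich[OF _ _ tendsto_const LIMSEQ_Suc[OF cc]])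
    show "\<forall>\<^sub>F n in sequentially. 0 \<le> (\<integral>\<omega>. \<bar>F (Yh n \<omega>) - F (X t \<omega>)\<bar> \<partial>M)"
      by (intro always_eventually allI Bochner_Integration.integral_nonneg) auto
    show "\<forall>\<^sub>F n in sequentially. (\<integral>\<omega>. \<bar>F (Yh n \<omega>) - F (X t \<omega>)\<bar> \<partial>M)
        \<le> (\<integral>\<omega>. \<bar>F (X (sk (Suc n)) \<omega>) - F (X t \<omega>)\<bar> \<partial>M)"
      by (intro always_eventually allI) (unfold Yh_def, rule bound, simp)
  qed
  have "conv_in_prob M Yh (X t)"
    by (rule Z.conv_back[OF A(7) A(8) Yhm lim])
  then show ?thesis
    unfolding conv_in_prob_def Yh_def by (auto intro: LIMSEQ_imp_Suc)
qed

end
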